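(* Let $G$ be a $2$-edge-connected graph and $e\in E(G)$. Then the inequality $x_e\le 1$ defines a facet of $\mathrm{TECSP}(G)$.
   Context: All graphs are finite, simple and undirected. An edge is a bridge if its removal increases the number of connected components. A graph is $2$-edge-connected if it is connected and has no bridges; the empty graph and a single vertex are $2$-edge-connected. $\chi^H\in\{0,1\}^{E(G)}$ is the incidence vector of $E(H)$, and $\mathrm{TECSP}(G)=\mathrm{conv}\{\chi^H : H\subseteq G\text{ is }2\text{-edge-connected}\}\subseteq\mathbb{R}^{E(G)}$. A facet is a face of dimension $\dim(\mathrm{TECSP}(G))-1$. *)

theory Defs
  imports "HOL-Analysis.Analysis"
begin

text \<open>A finite simple graph: vertex set V, edges are the elements of a finite type 'e,
  each edge e has a 2-element set of endpoints ends e contained in V, and ends is injective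
  (no parallel edges).\<close>

definition simple_graph :: "'v set \<Rightarrow> ('e::finite \<Rightarrow> 'v set) \<Rightarrow> bool" where
  "simple_graph V ends \<longleftrightarrow> finite V \<and> inj ends \<and> (\<forall>e. card (ends e) = 2 \<and> ends e \<subseteq> V)"

definition is_subgraph :: "'v set \<Rightarrow> ('e \<Rightarrow> 'v set) \<Rightarrow> 'v set \<Rightarrow> 'e set \<Rightarrow> bool" where
  "is_subgraph V ends W F \<longleftrightarrow> W \<subseteq> V \<and> (\<forall>f\<in>F. ends f \<subseteq> W)"

definition adj :: "('e \<Rightarrow> 'v set) \<Rightarrow> 'e set \<Rightarrow> 'v \<Rightarrow> 'v \<Rightarrow> bool" where
  "adj ends F u v \<longleftrightarrow> (\<exists>f\<in>F. ends f = {u, v})"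

definition reach :: "('e \<Rightarrow> 'v set) \<Rightarrow> 'e set \<Rightarrow> 'v \<Rightarrow> 'v \<Rightarrow> bool" where
  "reach ends F = (adj ends F)\<^sup>*\<^sup>*"

definition connected_graph :: "('e \<Rightarrow> 'v set) \<Rightarrow> 'v set \<Rightarrow> 'e set \<Rightarrow> bool" where
  "connected_graph ends W F \<longleftrightarrow> (\<forall>u\<in>W. \<forall>v\<in>W. reach ends F u v)"

definition components :: "('e \<Rightarrow> 'v set) \<Rightarrow> 'v set \<Rightarrow> 'e set \<Rightarrow> 'v set set" where
  "components ends W F = (\<lambda>u. {v\<in>W. reach ends F u v}) ` W"

definition is_bridge :: "('e \<Rightarrow> 'v set) \<Rightarrow> 'v set \<Rightarrow> 'e set \<Rightarrow> 'e \<Rightarrow> bool" where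
  "is_bridge ends W F f \<longleftrightarrow> f \<in> F \<and>
     card (components ends W (F - {f})) > card (components ends W F)"

text \<open>2-edge-connected: connected and without bridges (empty graph and single vertex included).\<close>
definition two_edge_connected :: "('e \<Rightarrow> 'v set) \<Rightarrow> 'v set \<Rightarrow> 'e set \<Rightarrow> bool" where
  "two_edge_connected ends W F \<longleftrightarrow>
     connected_graph ends W F \<and> (\<forall>f\<in>F. \<not> is_bridge ends W F f)"

definition incidence_vector :: "('e::finite) set \<Rightarrow> real ^ 'e" where
  "incidence_vector F = (\<chi> i. if i \<in> F then 1 else 0)"

definition TECSP :: "'v set \<Rightarrow> ('e::finite \<Rightarrow> 'v set) \<Rightarrow> (real ^ 'e) set" where
  "TECSP V ends = convex hull
     {incidence_vector F | W F. is_subgraph V ends W F \<and> two_edge_connected ends W F}"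

end

theory Submission
  imports Defs
begin

lemma adj_sym: "adj ends F u v \<Longrightarrow> adj ends F v u"
  unfolding adj_def by (auto simp: insert_commute)

lemma reach_sym: "reach ends F u v \<Longrightarrow> reach ends F v u"
  unfolding reach_def
proof (induction rule: rtranclp_induct)
  case base then show ?case by simp
next
  case (step y z)
  show ?case
    by (rule converse_rtranclp_into_rtranclp[OF adj_sym[OF step(2)] step(3)])
qed

lemma reach_trans: "reach ends F u v \<Longrightarrow> reach ends F v w \<Longrightarrow> reach ends F u w"
  unfolding reach_def by (rule rtranclp_trans)

lemma reach_refl[simp]: "reach ends F u u"
  unfolding reach_def by simp

lemma reach_mono: "F \<subseteq> F' \<Longrightarrow> reach ends F u v \<Longrightarrow> reach ends F' u v"
proof -
  assume A: "F \<subseteq> F'"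
  have ad: "adj ends F' x y" if "adj ends F x y" for x y
    using that A unfolding adj_def by blast
  assume "reach ends F u v"
  then have "(adj ends F)\<^sup>*\<^sup>* u v" unfolding reach_def .
  then have "(adj ends F')\<^sup>*\<^sup>* u v"
  proof (induction rule: rtranclp_induct)
    case base then show ?case by simp
  next
    case (step y z) then show ?case using ad[OF step(2)] by (meson rtranclp.rtrancl_into_rtrancl)
  qed
  then show ?thesis unfolding reach_def .
qed

lemma card2_eq:
  assumes "card (ends f) = 2" "x \<in> ends f" "y \<in> ends f" "x \<noteq> y"
  shows "ends f = {x, y}"
proof -
  obtain p q where pq: "ends f = {p,q}" "p \<noteq> q" using card_2_iff[THEN iffD1, OF assms(1)] by blast
  have "x \<in> {p,q}" "y \<in> {p,q}" using pq assms(2,3) by simp_all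
  then have "x = p \<and> y = q \<or> x = q \<and> y = p" using assms(4) by blast
  then show ?thesis using pq by (auto simp: insert_commute)
qed

lemma reach_edge:
  assumes "card (ends f) = 2" "f \<in> F" "x \<in> ends f" "y \<in> ends f"
  shows "reach ends F x y"
proof (cases "x = y")
  case True then show ?thesis by simp
next
  case False
  then have "adj ends F x y" using card2_eq[of ends f x y] assms False unfolding adj_def by blast
  then show ?thesis unfolding reach_def by simp
qed

lemma adj_D: "adj ends F x y \<Longrightarrow> \<exists>k\<in>F. ends k = {x,y}"
  unfolding adj_def by auto

lemma reach_remove_edge:
  assumes "reach ends F c w" "c \<in> ends h"
  shows "\<exists>d\<in>ends h. reach ends (F - {h}) d w"
  using assms(1) unfolding reach_def
proof (induction rule: rtranclp_induct)
  case base then show ?case using assms(2) by auto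
next
  case (step x y)
  then obtain d where d: "d \<in> ends h" "(adj ends (F - {h}))\<^sup>*\<^sup>* d x" by blast
  obtain k where k: "k \<in> F" "ends k = {x,y}" using adj_D[OF step(2)] by blast
  show ?case
  proof (cases "k = h")
    case True then show ?thesis using k by auto
  next
    case False
    then have "adj ends (F - {h}) x y" using k unfolding adj_def by blast
    then show ?thesis using d by (meson rtranclp.rtrancl_into_rtrancl)
  qed
qed

lemma reach_remove_edge2:
  assumes "reach ends F a x"
  shows "reach ends (F - {h}) a x \<or> (\<forall>d\<in>ends h. reach ends F a d)"
  using assms unfolding reach_def
proof (induction rule: rtranclp_induct)
  case base then show ?case by simp
next
  case (step x y)
  obtain k where k: "k \<in> F" "ends k = {x,y}" using adj_D[OF step(2)] by blast
  show ?case
  proof (cases "k = h")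
    case True
    have "(adj ends F)\<^sup>*\<^sup>* a y" using step(1,2) by (rule rtranclp.rtrancl_into_rtrancl)
    then show ?thesis using k True step(1) by (auto simp: reach_def)
  next
    case False
    then have "adj ends (F - {h}) x y" using k unfolding adj_def by blast
    then show ?thesis using step(3) by (meson rtranclp.rtrancl_into_rtrancl)
  qed
qed

lemma reach_cross:
  assumes "reach ends F x y" "x \<in> A" "y \<notin> A"
  shows "\<exists>k\<in>F. \<exists>a\<in>ends k. \<exists>b\<in>ends k. a \<in> A \<and> b \<notin> A"
proof -
  have "(adj ends F)\<^sup>*\<^sup>* x y" using assms(1) unfolding reach_def .
  then have "y \<notin> A \<longrightarrow> (\<exists>k\<in>F. \<exists>a\<in>ends k. \<exists>b\<in>ends k. a \<in> A \<and> b \<notin> A)"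
  proof (induction rule: rtranclp_induct)
    case base then show ?case using assms(2) by blast
  next
    case (step y z)
    obtain k where k: "k \<in> F" "ends k = {y,z}" using adj_D[OF step(2)] by blast
    show ?case
    proof (cases "y \<in> A")
      case True
      show ?thesis
      proof
        assume "z \<notin> A"
        then show "\<exists>k\<in>F. \<exists>a\<in>ends k. \<exists>b\<in>ends k. a \<in> A \<and> b \<notin> A"
          using k True by blast
      qed
    next
      case False then show ?thesis using step(3) by blast
    qed
  qed
  then show ?thesis using assms(3) by blast
qed

lemma conn_remove:
  assumes conn: "\<forall>x\<in>W. \<forall>y\<in>W. reach ends F x y"
    and sub: "ends h \<subseteq> W" and ne: "c \<in> ends h"
    and ee: "\<forall>a\<in>ends h. \<forall>b\<in>ends h. reach ends (F - {h}) a b"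
  shows "\<forall>x\<in>W. \<forall>y\<in>W. reach ends (F - {h}) x y"
proof -
  have "reach ends (F - {h}) c x" if "x \<in> W" for x
  proof -
    have "reach ends F c x" using conn sub ne that by blast
    then obtain d where "d \<in> ends h" "reach ends (F - {h}) d x" using reach_remove_edge[of ends F c x h] ne by blast
    then show ?thesis using ee ne reach_trans[of ends "F - {h}" c d x] by blast
  qed
  then show ?thesis using reach_sym[of ends "F - {h}" c] reach_trans[of ends "F - {h}" _ c] by blast
qed

definition good :: "'v set \<Rightarrow> ('e \<Rightarrow> 'v set) \<Rightarrow> 'v set \<Rightarrow> 'e set \<Rightarrow> bool" where
  "good V ends W F \<longleftrightarrow> W \<subseteq> V \<and> (\<forall>f\<in>F. ends f \<subseteq> W) \<and> (\<forall>x\<in>W. \<forall>y\<in>W. reach ends F x y) \<and>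
     (\<forall>f\<in>F. \<forall>x\<in>ends f. \<forall>y\<in>ends f. reach ends (F - {f}) x y)"

lemma reach_eq_if_nonbridge:
  assumes "f \<in> F" "ends f = {a,b}" "reach ends (F - {f}) a b"
  shows "reach ends F = reach ends (F - {f})"
proof (intro ext iffI)
  fix x y assume "reach ends F x y"
  then show "reach ends (F - {f}) x y" unfolding reach_def
  proof (induction rule: rtranclp_induct)
    case base then show ?case by simp
  next
    case (step y z)
    obtain k where k: "k \<in> F" "ends k = {y,z}" using adj_D[OF step(2)] by blast
    show ?case
    proof (cases "k = f")
      case True
      then have "{y,z} = {a,b}" using k assms by simp
      then have "reach ends (F - {f}) y z" using doubleton_eq_iff[of y z a b] assms(3) reach_sym[OF assms(3)]
        by auto
      then have "(adj ends (F - {f}))\<^sup>*\<^sup>* y z" unfolding reach_def .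
      with step(3) show ?thesis by (rule rtranclp_trans)
    next
      case False
      then have "adj ends (F - {f}) y z" using k unfolding adj_def by blast
      then show ?thesis using step(3) by (meson rtranclp.rtrancl_into_rtrancl)
    qed
  qed
next
  fix x y assume "reach ends (F - {f}) x y"
  then show "reach ends F x y" by (rule reach_mono[rotated]) auto
qed

lemma bridge_card_iff:
  assumes fin: "finite W" and sub: "\<forall>h\<in>F. ends h \<subseteq> W" and f: "f \<in> F" and ab: "ends f = {a,b}"
  shows "card (components ends W (F - {f})) > card (components ends W F) \<longleftrightarrow> \<not> reach ends (F - {f}) a b"
proof
  assume gt: "card (components ends W (F - {f})) > card (components ends W F)"
  show "\<not> reach ends (F - {f}) a b"
  proof
    assume "reach ends (F - {f}) a b"
    then have "reach ends F = reach ends (F - {f})" using reach_eq_if_nonbridge[of f F ends a b] f ab by blast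
    then show False using gt unfolding components_def by simp
  qed
next
  assume nr: "\<not> reach ends (F - {f}) a b"
  define c' where "c' u = {v\<in>W. reach ends (F - {f}) u v}" for u
  define c where "c u = {v\<in>W. reach ends F u v}" for u
  define g where "g C = {v\<in>W. \<exists>u\<in>C. reach ends F u v}" for C
  have aW: "a \<in> W" and bW: "b \<in> W" using sub f ab by auto
  have gc: "g (c' u) = c u" if "u \<in> W" for u
  proof
    show "g (c' u) \<subseteq> c u"
    proof
      fix v assume "v \<in> g (c' u)"
      then obtain u' where "v \<in> W" "u' \<in> c' u" "reach ends F u' v" unfolding g_def by blast
      then have "reach ends (F - {f}) u u'" unfolding c'_def by blast
      then have "reach ends F u u'" by (rule reach_mono[rotated]) auto
      then show "v \<in> c u" unfolding c_def using \<open>v \<in> W\<close> reach_trans[OF _ \<open>reach ends F u' v\<close>] by blast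
    qed
    show "c u \<subseteq> g (c' u)"
    proof
      fix v assume v: "v \<in> c u"
      have "u \<in> c' u" unfolding c'_def using that by simp
      moreover have "reach ends F u v" "v \<in> W" using v unfolding c_def by auto
      ultimately show "v \<in> g (c' u)" unfolding g_def by blast
    qed
  qed
  have img: "c ` W = g ` (c' ` W)" unfolding image_image
    by (rule image_cong) (simp_all add: gc)
  have finX: "finite (c' ` W)" using fin by simp
  have "b \<in> c' b" unfolding c'_def using bW by simp
  moreover have "b \<notin> c' a" unfolding c'_def using nr by simp
  ultimately have ne: "c' a \<noteq> c' b" by blast
  have "adj ends F a b" using f ab unfolding adj_def by blast
  then have "reach ends F a b" unfolding reach_def by simp
  then have eqab: "c a = c b" unfolding c_def
    using reach_trans[OF \<open>reach ends F a b\<close>] reach_trans[OF reach_sym[OF \<open>reach ends F a b\<close>]] by blast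
  have "\<not> inj_on g (c' ` W)"
  proof
    assume "inj_on g (c' ` W)"
    moreover have "g (c' a) = g (c' b)" using gc[OF aW] gc[OF bW] eqab by simp
    moreover have "c' a \<in> c' ` W" "c' b \<in> c' ` W" using aW bW by simp_all
    ultimately have "c' a = c' b" by (rule inj_onD)
    then show False using ne by simp
  qed
  then have "card (g ` (c' ` W)) \<noteq> card (c' ` W)" using inj_on_iff_eq_card[OF finX, of g] by simp
  moreover have "card (g ` (c' ` W)) \<le> card (c' ` W)" using card_image_le[OF finX] .
  ultimately have "card (c ` W) < card (c' ` W)" using img by simp
  then show "card (components ends W (F - {f})) > card (components ends W F)"
    unfolding components_def c_def c'_def by simp
qed

lemma good_iff:
  assumes fin: "finite V" and c2: "\<forall>f. card (ends f) = 2"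
  shows "(is_subgraph V ends W F \<and> two_edge_connected ends W F) \<longleftrightarrow> good V ends W F"
proof
  assume A: "is_subgraph V ends W F \<and> two_edge_connected ends W F"
  then have WV: "W \<subseteq> V" and sub: "\<forall>h\<in>F. ends h \<subseteq> W" unfolding is_subgraph_def by auto
  have finW: "finite W" using WV fin finite_subset by auto
  have cg: "\<forall>x\<in>W. \<forall>y\<in>W. reach ends F x y" using A unfolding two_edge_connected_def connected_graph_def by blast
  have nb: "\<forall>x\<in>ends f. \<forall>y\<in>ends f. reach ends (F - {f}) x y" if "f \<in> F" for f
  proof -
    obtain a b where ab: "ends f = {a,b}" using card_2_iff[THEN iffD1, OF c2[rule_format, of f]] by blast
    have "\<not> is_bridge ends W F f" using A that unfolding two_edge_connected_def by blast
    then have "\<not> card (components ends W (F - {f})) > card (components ends W F)"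
      using that unfolding is_bridge_def by blast
    then have r: "reach ends (F - {f}) a b"
      using bridge_card_iff[OF finW sub that ab] by blast
    have r2: "reach ends (F - {f}) b a" using reach_sym[OF r] .
    show ?thesis unfolding ab using r r2 by auto
  qed
  show "good V ends W F" unfolding good_def using WV sub cg nb by blast
next
  assume G: "good V ends W F"
  then have WV: "W \<subseteq> V" and sub: "\<forall>h\<in>F. ends h \<subseteq> W" unfolding good_def by auto
  have finW: "finite W" using WV fin finite_subset by auto
  have nb: "\<not> is_bridge ends W F f" if "f \<in> F" for f
  proof -
    obtain a b where ab: "ends f = {a,b}" using card_2_iff[THEN iffD1, OF c2[rule_format, of f]] by blast
    have "\<forall>x\<in>ends f. \<forall>y\<in>ends f. reach ends (F - {f}) x y" using G that unfolding good_def by blast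
    then have "reach ends (F - {f}) a b" using ab by blast
    then have "\<not> card (components ends W (F - {f})) > card (components ends W F)"
      using bridge_card_iff[OF finW sub that ab] by blast
    then show ?thesis unfolding is_bridge_def by blast
  qed
  have cg: "connected_graph ends W F" using G unfolding good_def connected_graph_def by blast
  have "two_edge_connected ends W F" unfolding two_edge_connected_def using cg nb by simp
  moreover have "is_subgraph V ends W F" unfolding is_subgraph_def using WV sub by simp
  ultimately show "is_subgraph V ends W F \<and> two_edge_connected ends W F" by simp
qed

lemma goodD:
  assumes "good V ends W F"
  shows "W \<subseteq> V" "\<And>f. f \<in> F \<Longrightarrow> ends f \<subseteq> W"
    "\<And>x y. x \<in> W \<Longrightarrow> y \<in> W \<Longrightarrow> reach ends F x y"
    "\<And>f x y. f \<in> F \<Longrightarrow> x \<in> ends f \<Longrightarrow> y \<in> ends f \<Longrightarrow> reach ends (F - {f}) x y"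
  using assms unfolding good_def by blast+

lemma goodI:
  assumes "W \<subseteq> V" "\<And>f. f \<in> F \<Longrightarrow> ends f \<subseteq> W"
    "\<And>x y. x \<in> W \<Longrightarrow> y \<in> W \<Longrightarrow> reach ends F x y"
    "\<And>f x y. f \<in> F \<Longrightarrow> x \<in> ends f \<Longrightarrow> y \<in> ends f \<Longrightarrow> reach ends (F - {f}) x y"
  shows "good V ends W F"
  using assms unfolding good_def by blast

lemma good_Union:
  assumes A: "\<And>p. p \<in> K \<Longrightarrow> good V ends (fst p) (snd p)" and Z: "\<And>p. p \<in> K \<Longrightarrow> z \<in> fst p"
  shows "good V ends (\<Union>(fst ` K)) (\<Union>(snd ` K))"
proof (rule goodI)
  show "\<Union>(fst ` K) \<subseteq> V" using goodD(1)[OF A] by blast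
next
  fix f assume "f \<in> \<Union>(snd ` K)"
  then obtain p where p: "p \<in> K" "f \<in> snd p" by blast
  have "ends f \<subseteq> fst p" by (rule goodD(2)[OF A[OF p(1)] p(2)])
  then show "ends f \<subseteq> \<Union>(fst ` K)" using p(1) by blast
next
  fix x y assume x: "x \<in> \<Union>(fst ` K)" and y: "y \<in> \<Union>(fst ` K)"
  then obtain p q where p: "p \<in> K" "x \<in> fst p" and q: "q \<in> K" "y \<in> fst q" by blast
  have "reach ends (snd p) x z" by (rule goodD(3)[OF A[OF p(1)] p(2) Z[OF p(1)]])
  moreover have "snd p \<subseteq> \<Union>(snd ` K)" using p(1) by blast
  ultimately have 1: "reach ends (\<Union>(snd ` K)) x z" by (rule reach_mono[rotated])
  have "reach ends (snd q) z y" by (rule goodD(3)[OF A[OF q(1)] Z[OF q(1)] q(2)])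
  moreover have "snd q \<subseteq> \<Union>(snd ` K)" using q(1) by blast
  ultimately have 2: "reach ends (\<Union>(snd ` K)) z y" by (rule reach_mono[rotated])
  show "reach ends (\<Union>(snd ` K)) x y" by (rule reach_trans[OF 1 2])
next
  fix f x y assume f: "f \<in> \<Union>(snd ` K)" and x: "x \<in> ends f" and y: "y \<in> ends f"
  then obtain p where p: "p \<in> K" "f \<in> snd p" by blast
  have "reach ends (snd p - {f}) x y" by (rule goodD(4)[OF A[OF p(1)] p(2) x y])
  moreover have "snd p - {f} \<subseteq> \<Union>(snd ` K) - {f}" using p(1) by blast
  ultimately show "reach ends (\<Union>(snd ` K) - {f}) x y" by (rule reach_mono[rotated])
qed

lemma good_Un:
  assumes "good V ends W1 F1" "good V ends W2 F2" "z \<in> W1" "z \<in> W2"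
  shows "good V ends (W1 \<union> W2) (F1 \<union> F2)"
proof -
  let ?K = "{(W1,F1),(W2,F2)}"
  have "good V ends (\<Union>(fst ` ?K)) (\<Union>(snd ` ?K))"
  proof (rule good_Union[where z=z])
    fix p assume "p \<in> ?K"
    then have "p = (W1,F1) \<or> p = (W2,F2)" by blast
    then show "good V ends (fst p) (snd p)" "z \<in> fst p" using assms by auto
  qed
  moreover have "\<Union>(fst ` ?K) = W1 \<union> W2" "\<Union>(snd ` ?K) = F1 \<union> F2" by auto
  ultimately show ?thesis by simp
qed

lemma cycle_exists:
  assumes c2: "\<forall>f. card (ends f) = 2" and eV: "\<forall>f. ends f \<subseteq> V"
    and g: "g \<in> F" and ab: "ends g = {a,b}" and r: "reach ends (F - {g}) a b"
  shows "\<exists>W0 F0. good V ends W0 F0 \<and> g \<in> F0 \<and> F0 \<subseteq> (F :: ('e::finite) set)"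
proof -
  define Pr where "Pr F1 \<longleftrightarrow> F1 \<subseteq> F \<and> g \<in> F1 \<and> reach ends (F1 - {g}) a b" for F1
  have "Pr F" unfolding Pr_def using g r by simp
  then obtain F0 where F0: "Pr F0" and minF0: "\<And>F1. Pr F1 \<Longrightarrow> card F0 \<le> card F1"
    using ex_has_least_nat[of Pr F card] by blast
  have F0F: "F0 \<subseteq> F" and gF0: "g \<in> F0" and rF0: "reach ends (F0 - {g}) a b"
    using F0 unfolding Pr_def by auto
  have minr: "\<not> reach ends (F0 - {g} - {h}) a b" if h: "h \<in> F0" "h \<noteq> g" for h
  proof
    assume rr: "reach ends (F0 - {g} - {h}) a b"
    have "F0 - {h} - {g} = F0 - {g} - {h}" by blast
    then have "Pr (F0 - {h})" unfolding Pr_def using F0F gF0 h rr by auto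
    then have "card F0 \<le> card (F0 - {h})" by (rule minF0)
    moreover have "card (F0 - {h}) < card F0" using h by (intro card_Diff1_less) simp_all
    ultimately show False by simp
  qed
  define W0 where "W0 = \<Union>(ends ` F0)"
  have toa: "reach ends (F0 - {g}) a x" if x: "x \<in> W0" for x
  proof -
    obtain h where h: "h \<in> F0" "x \<in> ends h" using x unfolding W0_def by blast
    show ?thesis
    proof (cases "h = g")
      case True
      then have "x = a \<or> x = b" using h ab by auto
      then show ?thesis using rF0 by auto
    next
      case False
      have "reach ends (F0 - {g} - {h}) a b \<or> (\<forall>d\<in>ends h. reach ends (F0 - {g}) a d)"
        by (rule reach_remove_edge2[OF rF0])
      then show ?thesis using minr[OF h(1) False] h(2) by blast
    qed
  qed
  have conn: "\<forall>x\<in>W0. \<forall>y\<in>W0. reach ends F0 x y"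
  proof (intro ballI)
    fix x y assume "x \<in> W0" "y \<in> W0"
    then have xa: "reach ends (F0 - {g}) x a" and ay: "reach ends (F0 - {g}) a y"
      using reach_sym[OF toa[of x]] toa[of y] by blast+
    have "reach ends (F0 - {g}) x y" by (rule reach_trans[OF xa ay])
    then show "reach ends F0 x y" by (rule reach_mono[rotated]) blast
  qed
  have nb: "reach ends (F0 - {h}) x y" if h: "h \<in> F0" and x: "x \<in> ends h" and y: "y \<in> ends h" for h x y
  proof (cases "h = g")
    case True
    have "x = a \<or> x = b" "y = a \<or> y = b" using x y ab True by auto
    then show ?thesis using rF0 reach_sym[OF rF0] True by auto
  next
    case False
    have xW: "x \<in> W0" using h x unfolding W0_def by blast
    have "reach ends (F0 - {g}) x a" using reach_sym[OF toa[OF xW]] .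
    then obtain d where d: "d \<in> ends h" "reach ends (F0 - {g} - {h}) d a"
      using reach_remove_edge[of ends "F0 - {g}" x a h] x by blast
    have "reach ends (F0 - {g}) x b" using reach_trans[OF \<open>reach ends (F0 - {g}) x a\<close> rF0] .
    then obtain d' where d': "d' \<in> ends h" "reach ends (F0 - {g} - {h}) d' b"
      using reach_remove_edge[of ends "F0 - {g}" x b h] x by blast
    have dd: "d \<noteq> d'"
    proof
      assume "d = d'"
      then have "reach ends (F0 - {g} - {h}) d b" using d'(2) by simp
      then have "reach ends (F0 - {g} - {h}) a b"
        using reach_trans[OF reach_sym[OF d(2)]] by blast
      then show False using minr[OF h False] by simp
    qed
    have ehd: "ends h = {d, d'}" using card2_eq[of ends h d d'] c2 d(1) d'(1) dd by blast
    have sub: "F0 - {g} - {h} \<subseteq> F0 - {h}" by blast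
    have 1: "reach ends (F0 - {h}) d a" using reach_mono[OF sub d(2)] .
    have 3: "reach ends (F0 - {h}) b d'" using reach_sym[OF reach_mono[OF sub d'(2)]] .
    have 2: "reach ends (F0 - {h}) a b"
    proof -
      have "adj ends (F0 - {h}) a b" unfolding adj_def using gF0 False ab by blast
      then show ?thesis unfolding reach_def by simp
    qed
    have "reach ends (F0 - {h}) d d'" using reach_trans[OF reach_trans[OF 1 2] 3] .
    then show ?thesis using x y ehd reach_sym[of ends "F0 - {h}" d d'] by auto
  qed
  have "W0 \<subseteq> V" unfolding W0_def using eV by blast
  moreover have "\<forall>f\<in>F0. ends f \<subseteq> W0" unfolding W0_def by blast
  ultimately have "good V ends W0 F0" unfolding good_def using conn nb by blast
  then show ?thesis using gF0 F0F by blast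
qed

lemma ends2:
  assumes "card (ends f) = 2"
  obtains a b where "ends f = {a,b}" "a \<noteq> b"
  using card_2_iff[THEN iffD1, OF assms] by blast

lemma conn_of_good_remove:
  assumes G: "good V ends V UNIV" and c2: "\<forall>f. card (ends f) = 2"
    and A: "\<And>x y. x \<in> V \<Longrightarrow> y \<in> V \<Longrightarrow> reach ends F x y"
    and hF: "h \<in> F" and eh: "\<And>x y. x \<in> ends h \<Longrightarrow> y \<in> ends h \<Longrightarrow> reach ends (F - {h}) x y"
  shows "\<And>x y. x \<in> V \<Longrightarrow> y \<in> V \<Longrightarrow> reach ends (F - {h}) x y"
proof -
  have "card (ends h) = 2" using c2 by blast
  then obtain a b where ab: "ends h = {a,b}" "a \<noteq> b" by (rule ends2)
  have sub: "ends h \<subseteq> V" using goodD(2)[OF G, of h] by simp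
  have "\<forall>x\<in>V. \<forall>y\<in>V. reach ends (F - {h}) x y"
  proof (rule conn_remove[where c=a])
    show "\<forall>x\<in>V. \<forall>y\<in>V. reach ends F x y" using A by blast
    show "ends h \<subseteq> V" by (rule sub)
    show "a \<in> ends h" using ab by blast
    show "\<forall>x\<in>ends h. \<forall>y\<in>ends h. reach ends (F - {h}) x y" using eh by blast
  qed
  then show "\<And>x y. x \<in> V \<Longrightarrow> y \<in> V \<Longrightarrow> reach ends (F - {h}) x y" by blast
qed

lemma touching:
  assumes c2: "\<forall>f. card (ends f) = 2" and eV: "\<forall>f. ends f \<subseteq> V"
    and G: "good V ends V (UNIV :: ('e::finite) set)"
    and H: "good V ends WH FH" and eH: "e \<notin> FH" and fH: "f \<in> FH"
  shows "\<exists>WZ FZ. good V ends WZ FZ \<and> e \<in> FZ \<and> f \<notin> FZ \<and> WZ \<inter> WH \<noteq> {}"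
proof -
  have ef: "e \<noteq> f" using eH fH by blast
  have "card (ends e) = 2" "card (ends f) = 2" using c2 by blast+
  obtain u v where uv: "ends e = {u,v}" "u \<noteq> v" using \<open>card (ends e) = 2\<close> by (rule ends2)
  obtain p q where pq: "ends f = {p,q}" "p \<noteq> q" using \<open>card (ends f) = 2\<close> by (rule ends2)
  have connG: "\<And>x y. x \<in> V \<Longrightarrow> y \<in> V \<Longrightarrow> reach ends UNIV x y" using goodD(3)[OF G] by blast
  have nbG: "\<And>h x y. x \<in> ends h \<Longrightarrow> y \<in> ends h \<Longrightarrow> reach ends (UNIV - {h}) x y"
    using goodD(4)[OF G] by blast
  have WHV: "WH \<subseteq> V" using goodD(1)[OF H] .
  have pWH: "p \<in> WH" using goodD(2)[OF H fH] pq by blast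
  have conn1: "\<And>x y. x \<in> V \<Longrightarrow> y \<in> V \<Longrightarrow> reach ends (UNIV - {h}) x y" for h
    by (rule conn_of_good_remove[OF G c2 connG _ nbG]) auto
  have conn2: "\<And>x y. x \<in> V \<Longrightarrow> y \<in> V \<Longrightarrow> reach ends (UNIV - {h} - {f}) x y" if hH: "h \<notin> FH" for h
  proof (rule conn_of_good_remove[OF G c2 conn1])
    show "f \<in> UNIV - {h}" using hH fH by blast
    fix x y assume "x \<in> ends f" "y \<in> ends f"
    then have "reach ends (FH - {f}) x y" using goodD(4)[OF H fH] by blast
    moreover have "FH - {f} \<subseteq> UNIV - {h} - {f}" using hH by blast
    ultimately show "reach ends (UNIV - {h} - {f}) x y" by (rule reach_mono[rotated])
  qed
  have uV: "u \<in> V" and vV: "v \<in> V" using eV uv by auto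
  have "reach ends (UNIV - {e} - {f}) u v" using conn2[OF eH uV vV] .
  moreover have "UNIV - {e} - {f} = (UNIV - {f}) - {e}" by blast
  ultimately have r0: "reach ends ((UNIV - {f}) - {e}) u v" by simp
  have "e \<in> UNIV - {f}" using ef by blast
  then obtain W0 F0 where Z0: "good V ends W0 F0" "e \<in> F0" "F0 \<subseteq> UNIV - {f}"
    using cycle_exists[OF c2 eV _ uv(1) r0] by blast
  define K where "K = {p. good V ends (fst p) (snd p) \<and> e \<in> snd p \<and> f \<notin> snd p}"
  define KW where "KW = \<Union>(fst ` K)"
  define KF where "KF = \<Union>(snd ` K)"
  have uK: "u \<in> fst p" if "p \<in> K" for p
  proof -
    have "good V ends (fst p) (snd p)" "e \<in> snd p" using that unfolding K_def by auto
    then show ?thesis using goodD(2)[of V ends "fst p" "snd p" e] uv by blast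
  qed
  have goodK: "good V ends KW KF" unfolding KW_def KF_def
    by (rule good_Union[where z=u]) (use uK K_def in auto)
  have Z0K: "(W0, F0) \<in> K" unfolding K_def using Z0 by auto
  have eKF: "e \<in> KF" unfolding KF_def using Z0K Z0(2) by force
  have fKF: "f \<notin> KF" unfolding KF_def K_def by auto
  have uKW: "u \<in> KW" unfolding KW_def using uK Z0K by force
  have maxK: "FC \<subseteq> KF" if "good V ends WC FC" "e \<in> FC" "f \<notin> FC" for WC FC
  proof -
    have "(WC, FC) \<in> K" unfolding K_def using that by auto
    then show ?thesis unfolding KF_def by force
  qed
  have "KW \<inter> WH \<noteq> {}"
  proof
    assume disj: "KW \<inter> WH = {}"
    have pKW: "p \<notin> KW" using disj pWH by blast
    have "reach ends (UNIV - {f}) u p" using conn1[OF uV] pWH WHV by blast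
    then obtain k a b where k: "k \<in> UNIV - {f}" "a \<in> ends k" "b \<in> ends k" "a \<in> KW" "b \<notin> KW"
      using reach_cross[of ends "UNIV - {f}" u p KW] uKW pKW by blast
    have ab: "a \<noteq> b" using k by blast
    have ekab: "ends k = {a,b}" using card2_eq[of ends k a b] c2 k(2,3) ab by blast
    have kKF: "k \<notin> KF" using goodD(2)[OF goodK, of k] k(3,5) by blast
    show False
    proof (cases "reach ends ((UNIV - {f}) - {k}) a b")
      case True
      then obtain WC FC where C: "good V ends WC FC" "k \<in> FC" "FC \<subseteq> UNIV - {f}"
        using cycle_exists[OF c2 eV k(1) ekab] by blast
      have aWC: "a \<in> WC" using goodD(2)[OF C(1) C(2)] k(2) by blast
      have "good V ends (KW \<union> WC) (KF \<union> FC)" by (rule good_Un[OF goodK C(1) k(4) aWC])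
      moreover have "e \<in> KF \<union> FC" using eKF by blast
      moreover have "f \<notin> KF \<union> FC" using fKF C(3) by blast
      ultimately have "KF \<union> FC \<subseteq> KF" by (rule maxK)
      then show False using C(2) kKF by blast
    next
      case False
      have "k \<in> FH"
      proof (rule ccontr)
        assume "k \<notin> FH"
        have "a \<in> V" "b \<in> V" using eV k(2,3) by auto
        then have "reach ends (UNIV - {k} - {f}) a b" using conn2[OF \<open>k \<notin> FH\<close>] by blast
        moreover have "UNIV - {k} - {f} = (UNIV - {f}) - {k}" by blast
        ultimately show False using False by simp
      qed
      then have "a \<in> WH" using goodD(2)[OF H, of k] k(2) by blast
      then show False using k(4) disj by blast
    qed
  qed
  then show ?thesis using goodK eKF fKF by blast
qed

lemma iv_un_int: "incidence_vector (A \<union> B) + incidence_vector (A \<inter> B) = incidence_vector A + incidence_vector B"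
  unfolding incidence_vector_def by (simp add: vec_eq_iff)

lemma iv_empty: "incidence_vector {} = 0"
  unfolding incidence_vector_def by (simp add: vec_eq_iff)

lemma iv_e: "incidence_vector F $ e = (if e \<in> F then 1 else 0)"
  unfolding incidence_vector_def by simp

lemma span_lemma:
  fixes V :: "'v set" and ends :: "'e::finite \<Rightarrow> 'v set"
  assumes c2: "\<forall>f. card (ends f) = 2" and eV: "\<forall>f. ends f \<subseteq> V"
    and G: "good V ends V (UNIV :: ('e::finite) set)"
    and H: "good V ends WH FH" and eH: "e \<notin> FH"
  shows "incidence_vector FH \<in> span {incidence_vector F | W F. good V ends W F \<and> e \<in> F}"
proof -
  define S1 where "S1 = {incidence_vector F | W F. good V ends W F \<and> e \<in> F}"
  define L where "L = span S1"
  define Z where "Z = {p. good V ends (fst p) (snd p) \<and> e \<in> snd p \<and> fst p \<inter> WH \<noteq> {}}"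
  have "card (ends e) = 2" using c2 by blast
  then obtain u v where uv: "ends e = {u,v}" "u \<noteq> v" by (rule ends2)
  have uin: "u \<in> fst p" if "p \<in> Z" for p
  proof -
    have "good V ends (fst p) (snd p)" "e \<in> snd p" using that unfolding Z_def by auto
    then have "ends e \<subseteq> fst p" by (rule goodD(2))
    then show ?thesis using uv by blast
  qed
  have S1L: "incidence_vector F \<in> L" if "good V ends W F" "e \<in> F" for W F
    unfolding L_def S1_def by (rule span_base) (use that in blast)
  have LA1: "incidence_vector FH - incidence_vector (FH \<inter> snd p) \<in> L" if p: "p \<in> Z" for p
  proof -
    have gp: "good V ends (fst p) (snd p)" "e \<in> snd p" "fst p \<inter> WH \<noteq> {}" using p unfolding Z_def by auto
    then obtain z where z: "z \<in> WH" "z \<in> fst p" by blast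
    have "good V ends (WH \<union> fst p) (FH \<union> snd p)" by (rule good_Un[OF H gp(1) z])
    then have 1: "incidence_vector (FH \<union> snd p) \<in> L" using gp(2) S1L by blast
    have 2: "incidence_vector (snd p) \<in> L" using gp S1L by blast
    have "incidence_vector FH - incidence_vector (FH \<inter> snd p) =
          incidence_vector (FH \<union> snd p) - incidence_vector (snd p)"
      using iv_un_int[of FH "snd p"] by (simp add: algebra_simps)
    then show ?thesis using span_diff[OF 1[unfolded L_def] 2[unfolded L_def]] unfolding L_def by simp
  qed
  have Zun: "(fst p \<union> fst p', snd p \<union> snd p') \<in> Z" if "p \<in> Z" "p' \<in> Z" for p p'
  proof -
    have g: "good V ends (fst p) (snd p)" "good V ends (fst p') (snd p')" "e \<in> snd p" "fst p \<inter> WH \<noteq> {}"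
      using that unfolding Z_def by auto
    have "good V ends (fst p \<union> fst p') (snd p \<union> snd p')"
      by (rule good_Un[OF g(1,2) uin[OF that(1)] uin[OF that(2)]])
    then show ?thesis unfolding Z_def using g(3,4) by auto
  qed
  have LA2: "\<forall>zs. length zs = n \<longrightarrow> set zs \<subseteq> Z \<longrightarrow>
      incidence_vector FH - incidence_vector (FH \<inter> \<Inter>(snd ` set zs)) \<in> L" for n
  proof (induction n)
    case 0
    show ?case unfolding L_def by (simp add: span_zero)
  next
    case (Suc n)
    show ?case
    proof (intro allI impI)
      fix zs :: "('v set \<times> 'e set) list"
      assume len: "length zs = Suc n" and sub: "set zs \<subseteq> Z"
      then obtain z zs' where zs: "zs = z # zs'" by (cases zs) auto
      have len': "length zs' = n" using len zs by simp
      have zZ: "z \<in> Z" and sub': "set zs' \<subseteq> Z" using sub zs by auto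
      define ys where "ys = map (\<lambda>z'. (fst z \<union> fst z', snd z \<union> snd z')) zs'"
      have leny: "length ys = n" using len' unfolding ys_def by simp
      have suby: "set ys \<subseteq> Z" unfolding ys_def using Zun zZ sub' by auto
      define A where "A = \<Inter>(snd ` set zs')"
      have inty: "\<Inter>(snd ` set ys) = snd z \<union> A" unfolding ys_def A_def by auto
      have intz: "\<Inter>(snd ` set zs) = snd z \<inter> A" unfolding zs A_def by simp
      have d0: "incidence_vector FH - incidence_vector (FH \<inter> snd z) \<in> L" by (rule LA1[OF zZ])
      have d1: "incidence_vector FH - incidence_vector (FH \<inter> A) \<in> L"
        using Suc.IH[rule_format, OF len' sub'] unfolding A_def .
      have d2: "incidence_vector FH - incidence_vector (FH \<inter> (snd z \<union> A)) \<in> L"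
        using Suc.IH[rule_format, OF leny suby] unfolding inty .
      have e1: "(FH \<inter> snd z) \<union> (FH \<inter> A) = FH \<inter> (snd z \<union> A)" by blast
      have e2: "(FH \<inter> snd z) \<inter> (FH \<inter> A) = FH \<inter> (snd z \<inter> A)" by blast
      have eq: "incidence_vector FH - incidence_vector (FH \<inter> (snd z \<inter> A)) =
        (incidence_vector FH - incidence_vector (FH \<inter> snd z)) + (incidence_vector FH - incidence_vector (FH \<inter> A))
        - (incidence_vector FH - incidence_vector (FH \<inter> (snd z \<union> A)))"
        using iv_un_int[of "FH \<inter> snd z" "FH \<inter> A"] unfolding e1 e2 by (simp add: algebra_simps)
      have "incidence_vector FH - incidence_vector (FH \<inter> (snd z \<inter> A)) \<in> L"
        unfolding eq L_def by (rule span_diff[OF span_add[OF d0[unfolded L_def] d1[unfolded L_def]] d2[unfolded L_def]])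
      then show "incidence_vector FH - incidence_vector (FH \<inter> \<Inter>(snd ` set zs)) \<in> L"
        unfolding intz .
    qed
  qed
  obtain xs where xs: "set xs = FH" using finite_list[of FH] by auto
  have ex: "\<exists>p. p \<in> Z \<and> f \<notin> snd p" if fF: "f \<in> FH" for f
  proof -
    obtain WZ FZ where "good V ends WZ FZ" "e \<in> FZ" "f \<notin> FZ" "WZ \<inter> WH \<noteq> {}"
      using touching[OF c2 eV G H eH fF] by blast
    then show ?thesis unfolding Z_def by (intro exI[of _ "(WZ,FZ)"]) auto
  qed
  define sel where "sel f = (SOME p. p \<in> Z \<and> f \<notin> snd p)" for f
  have sp: "sel f \<in> Z \<and> f \<notin> snd (sel f)" if fF: "f \<in> FH" for f
    unfolding sel_def by (rule someI_ex[OF ex[OF fF]])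
  define zs where "zs = map sel xs"
  have setzs: "set zs = sel ` FH" unfolding zs_def using xs by simp
  have zsZ: "set zs \<subseteq> Z" unfolding setzs using sp by blast
  have "FH \<inter> \<Inter>(snd ` set zs) = {}"
  proof -
    have "f \<notin> \<Inter>(snd ` set zs)" if fF: "f \<in> FH" for f
    proof -
      have "sel f \<in> set zs" unfolding setzs using fF by blast
      then show ?thesis using sp[OF fF] by blast
    qed
    then show ?thesis by blast
  qed
  then have "incidence_vector FH - incidence_vector {} \<in> L" using LA2[rule_format, OF refl zsZ] by simp
  then show ?thesis unfolding L_def S1_def iv_empty by simp
qed

theorem mainTheorem6:
  fixes V :: "'v set" and ends :: "'e::finite \<Rightarrow> 'v set" and e :: 'e
  assumes "simple_graph V ends"
    and "two_edge_connected ends V UNIV"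
  shows "(\<forall>x\<in>TECSP V ends. x $ e \<le> 1) \<and>
         (TECSP V ends \<inter> {x. x $ e = 1}) facet_of (TECSP V ends)"
proof -
  have finV: "finite V" and c2: "\<forall>f. card (ends f) = 2" and eV: "\<forall>f. ends f \<subseteq> V"
    using assms(1) unfolding simple_graph_def by auto
  define S where "S = {incidence_vector F | W F. is_subgraph V ends W F \<and> two_edge_connected ends W F}"
  have P: "TECSP V ends = convex hull S" unfolding TECSP_def S_def by simp
  have Sg: "S = {incidence_vector F | W F. good V ends W F}"
    unfolding S_def using good_iff[OF finV c2] by blast
  have G: "good V ends V UNIV"
  proof -
    have "is_subgraph V ends V UNIV" unfolding is_subgraph_def using eV by blast
    then show ?thesis using good_iff[OF finV c2] assms(2) by blast
  qed
  define S1 where "S1 = {incidence_vector F | W F. good V ends W F \<and> e \<in> F}"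
  have le1: "\<forall>s\<in>S. s $ e \<le> 1" unfolding Sg by (auto simp: iv_e)
  have ax: "axis e (1::real) \<bullet> x = x $ e" for x :: "real ^ 'e"
    by (simp add: inner_axis')
  have cvx: "convex {x :: real ^ 'e. x $ e \<le> 1}"
    using convex_halfspace_le[of "axis e (1::real)" 1] unfolding ax .
  have Ple: "TECSP V ends \<subseteq> {x. x $ e \<le> 1}"
    unfolding P by (rule hull_minimal) (use le1 cvx in auto)
  have part1: "\<forall>x\<in>TECSP V ends. x $ e \<le> 1" using Ple by blast
  define Fc where "Fc = TECSP V ends \<inter> {x. x $ e = 1}"
  have cP: "convex (TECSP V ends)" unfolding P by simp
  have face: "Fc face_of TECSP V ends"
  proof -
    have "(TECSP V ends \<inter> {x. axis e 1 \<bullet> x = 1}) face_of TECSP V ends"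
      by (rule face_of_Int_supporting_hyperplane_le[OF cP]) (use part1 ax in simp)
    then show ?thesis unfolding Fc_def ax .
  qed
  have S1S: "S1 \<subseteq> S" unfolding S1_def Sg by blast
  have S1F: "S1 \<subseteq> Fc" unfolding Fc_def P
  proof
    fix x assume "x \<in> S1"
    then have "x \<in> S" "x $ e = 1" using S1S unfolding S1_def by (auto simp: iv_e)
    then show "x \<in> convex hull S \<inter> {x. x $ e = 1}" by (simp add: hull_inc)
  qed
  have univS1: "incidence_vector UNIV \<in> S1" unfolding S1_def using G by blast
  have Fne: "Fc \<noteq> {}" using S1F univS1 by blast
  have emp: "good V ends {} {}" unfolding good_def by simp
  have zS: "0 \<in> S" unfolding Sg using emp iv_empty by force
  have zP: "0 \<in> TECSP V ends" unfolding P using zS by (simp add: hull_inc)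
  have zF: "(0::real^'e) \<notin> Fc" unfolding Fc_def by simp
  have FneP: "Fc \<noteq> TECSP V ends" using zP zF by blast
  have lt: "aff_dim Fc < aff_dim (TECSP V ends)" by (rule face_of_aff_dim_lt[OF cP face FneP])
  have dP: "aff_dim (TECSP V ends) = aff_dim S" unfolding P by (rule aff_dim_convex_hull)
  have hull0: "affine hull (insert 0 S1) = span S1"
    using affine_hull_insert_span_gen[of 0 S1] by simp
  have Shull: "S \<subseteq> affine hull (insert 0 S1)"
  proof
    fix s assume "s \<in> S"
    then obtain W F where WF: "good V ends W F" "s = incidence_vector F" unfolding Sg by blast
    show "s \<in> affine hull (insert 0 S1)"
    proof (cases "e \<in> F")
      case True
      then have "s \<in> S1" unfolding S1_def using WF by blast
      then show ?thesis by (simp add: hull_inc)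
    next
      case False
      have "s \<in> span S1" unfolding S1_def WF(2) by (rule span_lemma[OF c2 eV G WF(1) False])
      then show ?thesis unfolding hull0 .
    qed
  qed
  have "aff_dim S \<le> aff_dim (affine hull (insert 0 S1))" by (rule aff_dim_subset[OF Shull])
  also have "\<dots> = aff_dim (insert 0 S1)" by simp
  also have "\<dots> \<le> aff_dim S1 + 1" by (simp add: aff_dim_insert)
  finally have d1: "aff_dim S \<le> aff_dim S1 + 1" .
  have d2: "aff_dim S1 \<le> aff_dim Fc" by (rule aff_dim_subset[OF S1F])
  have "aff_dim Fc = aff_dim (TECSP V ends) - 1" using lt dP d1 d2 by linarith
  then have "Fc facet_of TECSP V ends" unfolding facet_of_def using face Fne by blast
  then show ?thesis using part1 unfolding Fc_def by blast
qed

end
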